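(* Let $a\in\mathbb{R}$, $\tau>0$, $\omega>0$, and let $\mathcal L$ be as in the context. The boundary value problem for $g:[0,1]\to\mathbb{R}^{1\times2}$ $$g''(x)=g(x)(G_c-aE)-\mathcal L(x)g(0),\quad g'(0)=0,\quad g'(1)=-\gamma_ce^{-G_c\tau}$$ admits a unique solution $g\in H^2((0,1);\mathbb{R}^{1\times2})$.
   Context: $G_c=\begin{bmatrix}0&\omega\\-\omega&0\end{bmatrix}$, $E$ is the $2\times2$ identity matrix, $\gamma_c=[1,0]$. $\phi_0\equiv1$, $\phi_n(x)=\sqrt2\cos(n\pi x)$ ($n\ge1$), $\mathcal L(x)=\sum_{n=0}^N\ell_n\phi_n(x)$, where for some $\delta>0$, $N\in\mathbb{N}$ satisfies $a-(n\pi)^2<-\delta$ for all $n>N$, and $L=[\ell_0\ \ldots\ \ell_N]^\top\in\mathbb{R}^{N+1}$ is an observer gain chosen so that there is a positive-definite $Q$ with $Q(A+LC)+(A+LC)^\top Q<-2\delta Q$, where $A=\mathrm{diag}(a-(n\pi)^2)_{n=0}^N$ and $C=[1\ \sqrt2\ \ldots\ \sqrt2]\in\mathbb{R}^{1\times(N+1)}$. *)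

theory Defs
  imports "HOL-Analysis.Analysis"
begin

fun mpow :: "real^'n^'n \<Rightarrow> nat \<Rightarrow> real^'n^'n" where
  "mpow M 0 = mat 1"
| "mpow M (Suc n) = M ** mpow M n"

definition mexp :: "real^'n^'n \<Rightarrow> real^'n^'n" where
  "mexp M = (\<Sum>n. (1 / fact n) *\<^sub>R mpow M n)"

definition Gc :: "real \<Rightarrow> real^2^2" where
  "Gc \<omega> = vector [vector [0, \<omega>], vector [- \<omega>, 0]]"

definition gamma_c :: "real^2" where
  "gamma_c = vector [1, 0]"

definition phi :: "nat \<Rightarrow> real \<Rightarrow> real" where
  "phi n x = (if n = 0 then 1 else sqrt 2 * cos (real n * pi * x))"

definition Lfun :: "(nat \<Rightarrow> real) \<Rightarrow> nat \<Rightarrow> real \<Rightarrow> real" where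
  "Lfun l N x = (\<Sum>n\<le>N. l n * phi n x)"

text \<open>(N+1)x(N+1) matrices as functions nat => nat => real, indices 0..N.\<close>

definition Amat :: "real \<Rightarrow> nat \<Rightarrow> nat \<Rightarrow> real" where
  "Amat a i j = (if i = j then a - (real i * pi)^2 else 0)"

definition Cvec :: "nat \<Rightarrow> real" where
  "Cvec j = (if j = 0 then 1 else sqrt 2)"

definition ALC :: "real \<Rightarrow> (nat \<Rightarrow> real) \<Rightarrow> nat \<Rightarrow> nat \<Rightarrow> real" where
  "ALC a l i j = Amat a i j + l i * Cvec j"

definition mmul :: "nat \<Rightarrow> (nat \<Rightarrow> nat \<Rightarrow> real) \<Rightarrow> (nat \<Rightarrow> nat \<Rightarrow> real) \<Rightarrow> nat \<Rightarrow> nat \<Rightarrow> real" where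
  "mmul N M P i j = (\<Sum>k\<le>N. M i k * P k j)"

definition mtrans :: "(nat \<Rightarrow> nat \<Rightarrow> real) \<Rightarrow> nat \<Rightarrow> nat \<Rightarrow> real" where
  "mtrans M i j = M j i"

definition posdef :: "nat \<Rightarrow> (nat \<Rightarrow> nat \<Rightarrow> real) \<Rightarrow> bool" where
  "posdef N M \<longleftrightarrow> (\<forall>i\<le>N. \<forall>j\<le>N. M i j = M j i) \<and>
     (\<forall>x::nat \<Rightarrow> real. (\<exists>i\<le>N. x i \<noteq> 0) \<longrightarrow> (\<Sum>i\<le>N. \<Sum>j\<le>N. x i * M i j * x j) > 0)"

text \<open>Q(A+LC) + (A+LC)^T Q < -2 delta Q, i.e. -2 delta Q - (Q(A+LC) + (A+LC)^T Q) is positive definite.\<close>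
definition lyap_ok :: "real \<Rightarrow> nat \<Rightarrow> (nat \<Rightarrow> real) \<Rightarrow> real \<Rightarrow> (nat \<Rightarrow> nat \<Rightarrow> real) \<Rightarrow> bool" where
  "lyap_ok a N l \<delta> Q \<longleftrightarrow> posdef N Q \<and>
     posdef N (\<lambda>i j. - 2 * \<delta> * Q i j
        - (mmul N Q (ALC a l) i j + mmul N (mtrans (ALC a l)) Q i j))"

text \<open>g (continuous representative) belongs to H^2(0,1) with first derivative g1
  and weak second derivative g2: g is C^1 on [0,1] with derivative g1, g1 is the
  indefinite integral of g2, and g2 is square integrable on (0,1).\<close>
definition H2_on01 :: "(real \<Rightarrow> real^2) \<Rightarrow> (real \<Rightarrow> real^2) \<Rightarrow> (real \<Rightarrow> real^2) \<Rightarrow> bool" where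
  "H2_on01 g g1 g2 \<longleftrightarrow>
     (\<forall>x\<in>{0..1}. (g has_vector_derivative g1 x) (at x within {0..1})) \<and>
     (\<forall>x\<in>{0..1}. g1 x = g1 0 + integral {0..x} g2) \<and>
     g2 \<in> borel_measurable (lebesgue_on {0..1}) \<and>
     integrable (lebesgue_on {0..1}) (\<lambda>x. (norm (g2 x))^2)"

definition is_solution :: "real \<Rightarrow> real \<Rightarrow> real \<Rightarrow> (nat \<Rightarrow> real) \<Rightarrow> nat \<Rightarrow> (real \<Rightarrow> real^2) \<Rightarrow> bool" where
  "is_solution a \<tau> \<omega> l N g \<longleftrightarrow>
     (\<exists>g1 g2. H2_on01 g g1 g2 \<and>
        (AE x in lebesgue_on {0..1}. g2 x = g x v* (Gc \<omega> - a *\<^sub>R mat 1) - Lfun l N x *\<^sub>R g 0) \<and>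
        g1 0 = 0 \<and>
        g1 1 = - (gamma_c v* mexp (- (\<tau> *\<^sub>R Gc \<omega>))))"

end

theory Submission
  imports Defs
begin

definition qf :: "nat \<Rightarrow> (nat \<Rightarrow> nat \<Rightarrow> real) \<Rightarrow> (nat \<Rightarrow> real) \<Rightarrow> real" where
  "qf N M y = (\<Sum>i\<le>N. \<Sum>j\<le>N. y i * M i j * y j)"

lemma swap_inner:
  "(\<Sum>i\<in>A. \<Sum>j\<in>B. \<Sum>k\<in>C. f i j k) = (\<Sum>i\<in>A. \<Sum>k\<in>C. \<Sum>j\<in>B. f i j k)"
  by (rule sum.cong[OF refl], rule sum.swap)

lemma qf_P:
  fixes B Q :: "nat \<Rightarrow> nat \<Rightarrow> real"
  assumes sym: "\<forall>i\<le>N. \<forall>j\<le>N. Q i j = Q j i"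
  shows "qf N (\<lambda>i j. - 2 * \<delta> * Q i j - (mmul N Q B i j + mmul N (mtrans B) Q i j)) y
     = - 2 * \<delta> * qf N Q y - 2 * (\<Sum>i\<le>N. \<Sum>k\<le>N. y i * Q i k * (\<Sum>j\<le>N. B k j * y j))"
proof -
  have t1: "(\<Sum>i\<le>N. \<Sum>j\<le>N. y i * mmul N Q B i j * y j) = (\<Sum>i\<le>N. \<Sum>k\<le>N. y i * Q i k * (\<Sum>j\<le>N. B k j * y j))"
    unfolding mmul_def
  proof (rule sum.cong[OF refl])
    fix i
    have "(\<Sum>j\<le>N. y i * (\<Sum>k\<le>N. Q i k * B k j) * y j) = (\<Sum>j\<le>N. \<Sum>k\<le>N. y i * (Q i k * (B k j * y j)))"
      by (simp add: sum_distrib_left sum_distrib_right mult.assoc)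
    also have "... = (\<Sum>k\<le>N. \<Sum>j\<le>N. y i * (Q i k * (B k j * y j)))" by (rule sum.swap)
    also have "... = (\<Sum>k\<le>N. y i * Q i k * (\<Sum>j\<le>N. B k j * y j))" by (simp add: sum_distrib_left mult.assoc)
    finally show "(\<Sum>j\<le>N. y i * (\<Sum>k\<le>N. Q i k * B k j) * y j) = (\<Sum>k\<le>N. y i * Q i k * (\<Sum>j\<le>N. B k j * y j))" .
  qed
  have t2: "(\<Sum>i\<le>N. \<Sum>j\<le>N. y i * mmul N (mtrans B) Q i j * y j) = (\<Sum>k\<le>N. \<Sum>j\<le>N. (\<Sum>i\<le>N. B k i * y i) * Q k j * y j)"
  proof -
    have "(\<Sum>i\<le>N. \<Sum>j\<le>N. y i * mmul N (mtrans B) Q i j * y j) = (\<Sum>i\<le>N. \<Sum>j\<le>N. \<Sum>k\<le>N. B k i * y i * (Q k j * y j))"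
      unfolding mmul_def mtrans_def
      by (rule sum.cong[OF refl], rule sum.cong[OF refl]) (simp add: sum_distrib_left sum_distrib_right mult.assoc mult.left_commute)
    also have "... = (\<Sum>j\<le>N. \<Sum>i\<le>N. \<Sum>k\<le>N. B k i * y i * (Q k j * y j))" by (rule sum.swap)
    also have "... = (\<Sum>j\<le>N. \<Sum>k\<le>N. \<Sum>i\<le>N. B k i * y i * (Q k j * y j))" by (rule swap_inner)
    also have "... = (\<Sum>k\<le>N. \<Sum>j\<le>N. \<Sum>i\<le>N. B k i * y i * (Q k j * y j))" by (rule sum.swap)
    also have "... = (\<Sum>k\<le>N. \<Sum>j\<le>N. (\<Sum>i\<le>N. B k i * y i) * Q k j * y j)"
      by (simp add: sum_distrib_right mult.assoc)
    finally show ?thesis .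
  qed
  have t3: "(\<Sum>k\<le>N. \<Sum>j\<le>N. (\<Sum>i\<le>N. B k i * y i) * Q k j * y j) = (\<Sum>i\<le>N. \<Sum>k\<le>N. y i * Q i k * (\<Sum>j\<le>N. B k j * y j))"
  proof -
    have "(\<Sum>k\<le>N. \<Sum>j\<le>N. (\<Sum>i\<le>N. B k i * y i) * Q k j * y j) = (\<Sum>j\<le>N. \<Sum>k\<le>N. (\<Sum>i\<le>N. B k i * y i) * Q k j * y j)"
      by (rule sum.swap)
    also have "... = (\<Sum>j\<le>N. \<Sum>k\<le>N. y j * Q j k * (\<Sum>i\<le>N. B k i * y i))"
    proof (rule sum.cong[OF refl], rule sum.cong[OF refl])
      fix j k assume "j \<in> {..N}" "k \<in> {..N}"
      then have "Q k j = Q j k" using sym by auto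
      then show "(\<Sum>i\<le>N. B k i * y i) * Q k j * y j = y j * Q j k * (\<Sum>i\<le>N. B k i * y i)" by simp
    qed
    finally show ?thesis .
  qed
  have "qf N (\<lambda>i j. - 2 * \<delta> * Q i j - (mmul N Q B i j + mmul N (mtrans B) Q i j)) y
     = (\<Sum>i\<le>N. \<Sum>j\<le>N. - 2 * \<delta> * (y i * Q i j * y j) - (y i * mmul N Q B i j * y j) - (y i * mmul N (mtrans B) Q i j * y j))"
    unfolding qf_def by (rule sum.cong[OF refl], rule sum.cong[OF refl]) (simp add: algebra_simps)
  also have "... = - 2 * \<delta> * qf N Q y - (\<Sum>i\<le>N. \<Sum>j\<le>N. y i * mmul N Q B i j * y j) - (\<Sum>i\<le>N. \<Sum>j\<le>N. y i * mmul N (mtrans B) Q i j * y j)"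
    unfolding qf_def by (simp add: sum_subtractf sum_distrib_left)
  finally show ?thesis using t1 t2 t3 by simp
qed

definition sv :: "real \<Rightarrow> real \<Rightarrow> nat \<Rightarrow> complex" where
  "sv a \<omega> n = Complex ((real n * pi)^2 - a) \<omega>"

lemma posdef_pos:
  assumes "posdef N M" "\<exists>i\<le>N. y i \<noteq> 0" shows "qf N M y > 0"
proof -
  have "\<forall>x::nat \<Rightarrow> real. (\<exists>i\<le>N. x i \<noteq> 0) \<longrightarrow> (\<Sum>i\<le>N. \<Sum>j\<le>N. x i * M i j * x j) > 0"
    using assms(1) unfolding posdef_def by (rule conjunct2)
  then have "(\<exists>i\<le>N. y i \<noteq> 0) \<longrightarrow> (\<Sum>i\<le>N. \<Sum>j\<le>N. y i * M i j * y j) > 0" by (rule spec)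
  then show ?thesis unfolding qf_def using assms(2) by (rule mp)
qed

lemma posdef_nonneg:
  assumes "posdef N M" shows "qf N M y \<ge> 0"
proof (cases "\<exists>i\<le>N. y i \<noteq> 0")
  case True then show ?thesis using posdef_pos[OF assms True] by simp
next
  case False then show ?thesis unfolding qf_def by simp
qed

lemma S_ne_1:
  assumes om: "\<omega> \<noteq> 0" and de: "\<delta> > 0" and ly: "lyap_ok a N l \<delta> Q"
  shows "(\<Sum>n\<le>N. complex_of_real (l n * Cvec n) / sv a \<omega> n) \<noteq> 1"
proof
  assume S1: "(\<Sum>n\<le>N. complex_of_real (l n * Cvec n) / sv a \<omega> n) = 1"
  define x where "x n = complex_of_real (l n) / sv a \<omega> n" for n
  define u where "u n = Re (x n)" for n
  define v where "v n = Im (x n)" for n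
  have svnz: "sv a \<omega> n \<noteq> 0" for n using om by (simp add: sv_def complex_eq_iff)
  have xs: "x n * sv a \<omega> n = of_real (l n)" for n using svnz[of n] by (simp add: x_def)
  have e1: "- (a - (real n * pi)^2) * u n - \<omega> * v n = l n" for n
    using arg_cong[OF xs[of n], of Re] by (simp add: u_def v_def sv_def algebra_simps)
  have e2: "\<omega> * u n - (a - (real n * pi)^2) * v n = 0" for n
    using arg_cong[OF xs[of n], of Im] by (simp add: u_def v_def sv_def algebra_simps)
  have Sx: "(\<Sum>n\<le>N. complex_of_real (Cvec n) * x n) = 1"
    using S1 by (simp add: x_def mult.commute)
  have Cu: "(\<Sum>n\<le>N. Cvec n * u n) = 1"
    using arg_cong[OF Sx, of Re] by (simp add: u_def)
  have Cv: "(\<Sum>n\<le>N. Cvec n * v n) = 0"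
    using arg_cong[OF Sx, of Im] by (simp add: v_def)
  have Asum: "(\<Sum>j\<le>N. Amat a k j * y j) = (a - (real k * pi)^2) * y k" if "k \<le> N" for k y
  proof -
    have "(\<Sum>j\<le>N. Amat a k j * y j) = (\<Sum>j\<le>N. if j = k then (a - (real k * pi)^2) * y k else 0)"
      by (rule sum.cong) (auto simp: Amat_def)
    then show ?thesis using that by simp
  qed
  have Bu: "(\<Sum>j\<le>N. ALC a l k j * u j) = - \<omega> * v k" if "k \<le> N" for k
  proof -
    have "(\<Sum>j\<le>N. ALC a l k j * u j) = (\<Sum>j\<le>N. Amat a k j * u j) + l k * (\<Sum>j\<le>N. Cvec j * u j)"
      by (simp add: ALC_def algebra_simps sum.distrib sum_distrib_left)
    also have "... = (a - (real k * pi)^2) * u k + l k * 1" using Asum[OF that] Cu by simp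
    finally show ?thesis using e1[of k] by (simp add: algebra_simps)
  qed
  have Bv: "(\<Sum>j\<le>N. ALC a l k j * v j) = \<omega> * u k" if "k \<le> N" for k
  proof -
    have "(\<Sum>j\<le>N. ALC a l k j * v j) = (\<Sum>j\<le>N. Amat a k j * v j) + l k * (\<Sum>j\<le>N. Cvec j * v j)"
      by (simp add: ALC_def algebra_simps sum.distrib sum_distrib_left)
    also have "... = (a - (real k * pi)^2) * v k + l k * 0" using Asum[OF that] Cv by simp
    finally show ?thesis using e2[of k] by (simp add: algebra_simps)
  qed
  have Qp: "posdef N Q" and Pp: "posdef N (\<lambda>i j. - 2 * \<delta> * Q i j
        - (mmul N Q (ALC a l) i j + mmul N (mtrans (ALC a l)) Q i j))"
    using ly unfolding lyap_ok_def by auto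
  have sym: "\<forall>i\<le>N. \<forall>j\<le>N. Q i j = Q j i" using Qp unfolding posdef_def by auto
  define X where "X = (\<Sum>i\<le>N. \<Sum>k\<le>N. u i * Q i k * v k)"
  have X2: "(\<Sum>i\<le>N. \<Sum>k\<le>N. v i * Q i k * u k) = X"
    unfolding X_def
    apply (subst sum.swap)
    apply (rule sum.cong, simp)+
    using sym by (simp add: mult.commute mult.left_commute)
  have "(\<Sum>i\<le>N. \<Sum>k\<le>N. u i * Q i k * (\<Sum>j\<le>N. ALC a l k j * u j)) = - \<omega> * X"
  proof -
    have "(\<Sum>i\<le>N. \<Sum>k\<le>N. u i * Q i k * (\<Sum>j\<le>N. ALC a l k j * u j)) = (\<Sum>i\<le>N. \<Sum>k\<le>N. u i * Q i k * (- \<omega> * v k))"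
      by (intro sum.cong refl) (simp add: Bu)
    then show ?thesis unfolding X_def by (simp add: sum_distrib_left algebra_simps)
  qed
  then have Pu: "qf N (\<lambda>i j. - 2 * \<delta> * Q i j
        - (mmul N Q (ALC a l) i j + mmul N (mtrans (ALC a l)) Q i j)) u = - 2 * \<delta> * qf N Q u + 2 * \<omega> * X"
    using qf_P[OF sym, of \<delta> "ALC a l"] by (simp only:)
  have "(\<Sum>i\<le>N. \<Sum>k\<le>N. v i * Q i k * (\<Sum>j\<le>N. ALC a l k j * v j)) = \<omega> * X"
  proof -
    have "(\<Sum>i\<le>N. \<Sum>k\<le>N. v i * Q i k * (\<Sum>j\<le>N. ALC a l k j * v j)) = (\<Sum>i\<le>N. \<Sum>k\<le>N. v i * Q i k * (\<omega> * u k))"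
      by (intro sum.cong refl) (simp add: Bv)
    then show ?thesis unfolding X2[symmetric] by (simp add: sum_distrib_left algebra_simps)
  qed
  then have Pv: "qf N (\<lambda>i j. - 2 * \<delta> * Q i j
        - (mmul N Q (ALC a l) i j + mmul N (mtrans (ALC a l)) Q i j)) v = - 2 * \<delta> * qf N Q v - 2 * \<omega> * X"
    using qf_P[OF sym, of \<delta> "ALC a l"] by (simp only:)
  have unz: "\<exists>i\<le>N. u i \<noteq> 0"
  proof (rule ccontr)
    assume "\<not> ?thesis"
    then have "(\<Sum>n\<le>N. Cvec n * u n) = 0" by simp
    then show False using Cu by simp
  qed
  have "qf N Q u > 0" using posdef_pos[OF Qp unz] .
  moreover have "qf N (\<lambda>i j. - 2 * \<delta> * Q i j
        - (mmul N Q (ALC a l) i j + mmul N (mtrans (ALC a l)) Q i j)) u > 0"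
    using posdef_pos[OF Pp unz] .
  moreover have "qf N Q v \<ge> 0" using posdef_nonneg[OF Qp] .
  moreover have "qf N (\<lambda>i j. - 2 * \<delta> * Q i j
        - (mmul N Q (ALC a l) i j + mmul N (mtrans (ALC a l)) Q i j)) v \<ge> 0"
    using posdef_nonneg[OF Pp] .
  ultimately show False using Pu Pv de mult_pos_pos[OF de, of "qf N Q u"] mult_nonneg_nonneg[of \<delta> "qf N Q v"]
    by linarith
qed

lemma cosh_vd: fixes k :: complex shows "((\<lambda>x::real. cosh (k * of_real x)) has_vector_derivative (k * sinh (k * of_real x))) (at x within S)"
proof -
  have "((\<lambda>t. cosh (k * t)) has_field_derivative (sinh (k * of_real x) * k)) (at (of_real x))"
    by (auto intro!: derivative_eq_intros)
  from has_vector_derivative_real_field[OF this] show ?thesis by (simp add: mult.commute)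
qed

lemma sinh_vd: fixes k :: complex shows "((\<lambda>x::real. sinh (k * of_real x)) has_vector_derivative (k * cosh (k * of_real x))) (at x within S)"
proof -
  have "((\<lambda>t. sinh (k * t)) has_field_derivative (cosh (k * of_real x) * k)) (at (of_real x))"
    by (auto intro!: derivative_eq_intros)
  from has_vector_derivative_real_field[OF this] show ?thesis by (simp add: mult.commute)
qed

lemma const_on01:
  fixes f :: "real \<Rightarrow> complex"
  assumes "\<And>x. x \<in> {0..1} \<Longrightarrow> (f has_vector_derivative 0) (at x within {0..1})"
  shows "\<forall>x\<in>{0..1}. f x = f 0"
proof -
  obtain c where "\<And>x. x \<in> {0..1} \<Longrightarrow> f x = c"
    using has_vector_derivative_zero_constant[of "{0..1::real}" f] assms by auto
  then show ?thesis by force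
qed

lemma wronsk:
  fixes w w1 :: "real \<Rightarrow> complex" and k m :: complex
  assumes k2: "k^2 = m"
    and d1: "\<forall>x\<in>{0..1}. (w has_vector_derivative w1 x) (at x within {0..1})"
    and d2: "\<forall>x\<in>{0..1}. (w1 has_vector_derivative m * w x) (at x within {0..1})"
    and w10: "w1 0 = 0"
  shows "\<forall>x\<in>{0..1}. k * w x = k * w 0 * cosh (k * of_real x)"
    and "w1 1 = k * w 0 * sinh k"
proof -
  define p where "p x = w1 x * cosh (k * of_real x) - k * w x * sinh (k * of_real x)" for x
  define q where "q x = w1 x * sinh (k * of_real x) - k * w x * cosh (k * of_real x)" for x
  have "(p has_vector_derivative 0) (at x within {0..1})" if x: "x \<in> {0..1}" for x
  proof -
    have "(p has_vector_derivative
      ((w1 x * (k * sinh (k * of_real x)) + m * w x * cosh (k * of_real x))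
       - (k * w x * (k * cosh (k * of_real x)) + k * w1 x * sinh (k * of_real x)))) (at x within {0..1})"
      unfolding p_def
      by (intro has_vector_derivative_diff has_vector_derivative_mult has_vector_derivative_mult_right
          cosh_vd sinh_vd d1[rule_format, OF x] d2[rule_format, OF x])
    moreover have "((w1 x * (k * sinh (k * of_real x)) + m * w x * cosh (k * of_real x))
       - (k * w x * (k * cosh (k * of_real x)) + k * w1 x * sinh (k * of_real x))) = 0"
      by (simp add: k2[symmetric] power2_eq_square algebra_simps)
    ultimately show ?thesis by simp
  qed
  then have pc: "\<forall>x\<in>{0..1}. p x = p 0" by (rule const_on01)
  have "(q has_vector_derivative 0) (at x within {0..1})" if x: "x \<in> {0..1}" for x
  proof -
    have "(q has_vector_derivative
      ((w1 x * (k * cosh (k * of_real x)) + m * w x * sinh (k * of_real x))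
       - (k * w x * (k * sinh (k * of_real x)) + k * w1 x * cosh (k * of_real x)))) (at x within {0..1})"
      unfolding q_def
      by (intro has_vector_derivative_diff has_vector_derivative_mult has_vector_derivative_mult_right
          cosh_vd sinh_vd d1[rule_format, OF x] d2[rule_format, OF x])
    moreover have "((w1 x * (k * cosh (k * of_real x)) + m * w x * sinh (k * of_real x))
       - (k * w x * (k * sinh (k * of_real x)) + k * w1 x * cosh (k * of_real x))) = 0"
      by (simp add: k2[symmetric] power2_eq_square algebra_simps)
    ultimately show ?thesis by simp
  qed
  then have qc: "\<forall>x\<in>{0..1}. q x = q 0" by (rule const_on01)
  have p0: "p 0 = 0" by (simp add: p_def w10)
  have q0: "q 0 = - k * w 0" by (simp add: q_def w10)
  have hp: "cosh z ^ 2 - sinh z ^ 2 = 1" for z :: complex by (rule hyperbolic_pythagoras)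
  show "\<forall>x\<in>{0..1}. k * w x = k * w 0 * cosh (k * of_real x)"
  proof
    fix x :: real assume x: "x \<in> {0..1}"
    have "p x * sinh (k * of_real x) - q x * cosh (k * of_real x) = k * w x * (cosh (k * of_real x) ^ 2 - sinh (k * of_real x) ^ 2)"
      by (simp add: p_def q_def power2_eq_square algebra_simps)
    then have "k * w x = p x * sinh (k * of_real x) - q x * cosh (k * of_real x)" by (simp add: hp)
    also have "... = k * w 0 * cosh (k * of_real x)" using pc qc x p0 q0 by simp
    finally show "k * w x = k * w 0 * cosh (k * of_real x)" .
  qed
  have "p 1 * cosh k - q 1 * sinh k = w1 1 * (cosh k ^ 2 - sinh k ^ 2)"
    by (simp add: p_def q_def power2_eq_square algebra_simps)
  then have "w1 1 = p 1 * cosh k - q 1 * sinh k" by (simp add: hp)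
  also have "... = k * w 0 * sinh k" using pc qc p0 q0 by simp
  finally show "w1 1 = k * w 0 * sinh k" .
qed

definition dphi :: "nat \<Rightarrow> real \<Rightarrow> real" where
  "dphi n x = (if n = 0 then 0 else - (sqrt 2 * (real n * pi) * sin (real n * pi * x)))"

lemma phi_d: "((phi n) has_real_derivative dphi n x) (at x within S)"
proof (cases "n = 0")
  case True
  then have "phi n = (\<lambda>x. 1)" by (auto simp: phi_def)
  then show ?thesis using True by (simp add: dphi_def)
next
  case False
  then have "phi n = (\<lambda>x. sqrt 2 * cos (real n * pi * x))" by (auto simp: phi_def)
  have "((\<lambda>x. sqrt 2 * cos (real n * pi * x)) has_real_derivative dphi n x) (at x within S)"
    apply (rule derivative_eq_intros refl)+
    apply (simp add: dphi_def False)
    done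
  then show ?thesis using \<open>phi n = _\<close> by simp
qed

lemma dphi_d: "((dphi n) has_real_derivative (- ((real n * pi)^2) * phi n x)) (at x within S)"
proof (cases "n = 0")
  case True
  then have "dphi n = (\<lambda>x. 0)" by (auto simp: dphi_def)
  then show ?thesis using True by (simp add: phi_def)
next
  case False
  then have "dphi n = (\<lambda>x. - (sqrt 2 * (real n * pi) * sin (real n * pi * x)))" by (auto simp: dphi_def)
  have "((\<lambda>x. - (sqrt 2 * (real n * pi) * sin (real n * pi * x))) has_real_derivative (- ((real n * pi)^2) * phi n x)) (at x within S)"
    apply (rule derivative_eq_intros refl)+
    apply (simp add: phi_def False power2_eq_square)
    done
  then show ?thesis using \<open>dphi n = _\<close> by simp
qed

lemma phi_0: "phi n 0 = Cvec n" by (simp add: phi_def Cvec_def)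
lemma dphi_0: "dphi n 0 = 0" by (simp add: dphi_def)
lemma dphi_1: "dphi n 1 = 0" by (simp add: dphi_def)

definition mu :: "real \<Rightarrow> real \<Rightarrow> complex" where "mu a \<omega> = Complex (- a) \<omega>"
definition kk :: "real \<Rightarrow> real \<Rightarrow> complex" where "kk a \<omega> = csqrt (mu a \<omega>)"
definition cS :: "real \<Rightarrow> real \<Rightarrow> (nat \<Rightarrow> real) \<Rightarrow> nat \<Rightarrow> complex" where
  "cS a \<omega> l N = (\<Sum>n\<le>N. complex_of_real (l n * Cvec n) / sv a \<omega> n)"

lemma sv_mu: "sv a \<omega> n = mu a \<omega> + of_real ((real n * pi)^2)"
  by (simp add: sv_def mu_def complex_eq_iff)

lemma sv_nz: "\<omega> \<noteq> 0 \<Longrightarrow> sv a \<omega> n \<noteq> 0"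
  by (simp add: sv_def complex_eq_iff)

lemma kk_sq: "(kk a \<omega>)^2 = mu a \<omega>" by (simp add: kk_def)

lemma kk_nz: "\<omega> \<noteq> 0 \<Longrightarrow> kk a \<omega> \<noteq> 0"
  using kk_sq[of a \<omega>] by (auto simp: mu_def complex_eq_iff)

lemma sinh_kk_nz:
  assumes "\<omega> \<noteq> 0" shows "sinh (kk a \<omega>) \<noteq> 0"
proof
  define k where "k = kk a \<omega>"
  assume "sinh (kk a \<omega>) = 0"
  then have "exp k \<in> {1, -1}" unfolding k_def by (simp only: sinh_zero_iff)
  then have e: "exp k * exp k = 1" by auto
  have "exp (2 * k) = exp k * exp k" by (simp only: mult_2 exp_add)
  with e have "exp (2 * k) = 1" by simp
  then have "Re (2 * k) = 0" by (simp only: exp_eq_1)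
  then have r: "Re k = 0" by simp
  have "Im (k * k) = 0" using r by simp
  moreover have "k * k = mu a \<omega>" using kk_sq[of a \<omega>] unfolding k_def by (simp only: power2_eq_square)
  ultimately show False using assms by (simp add: mu_def)
qed

definition FA :: "real \<Rightarrow> real \<Rightarrow> complex \<Rightarrow> complex" where
  "FA a \<omega> \<beta> = \<beta> / (kk a \<omega> * sinh (kk a \<omega>))"
definition FZ :: "real \<Rightarrow> real \<Rightarrow> (nat \<Rightarrow> real) \<Rightarrow> nat \<Rightarrow> complex \<Rightarrow> complex" where
  "FZ a \<omega> l N \<beta> = FA a \<omega> \<beta> / (1 - cS a \<omega> l N)"
definition Fz :: "real \<Rightarrow> real \<Rightarrow> (nat \<Rightarrow> real) \<Rightarrow> nat \<Rightarrow> complex \<Rightarrow> real \<Rightarrow> complex" where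
  "Fz a \<omega> l N \<beta> x = FA a \<omega> \<beta> * cosh (kk a \<omega> * of_real x)
     + (\<Sum>n\<le>N. of_real (l n) * FZ a \<omega> l N \<beta> / sv a \<omega> n * of_real (phi n x))"

lemma P_vd:
  "((\<lambda>x. \<Sum>n\<le>N. c n * complex_of_real (phi n x)) has_vector_derivative
     (\<Sum>n\<le>N. c n * complex_of_real (dphi n x))) (at x within S)"
  by (intro has_vector_derivative_sum has_vector_derivative_mult_right has_vector_derivative_of_real phi_d)

lemma P1_vd:
  "((\<lambda>x. \<Sum>n\<le>N. c n * complex_of_real (dphi n x)) has_vector_derivative
     (\<Sum>n\<le>N. c n * complex_of_real (- ((real n * pi)^2) * phi n x))) (at x within S)"
  by (intro has_vector_derivative_sum has_vector_derivative_mult_right has_vector_derivative_of_real dphi_d)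

lemma L_expand:
  assumes om: "\<omega> \<noteq> 0"
  shows "mu a \<omega> * (\<Sum>n\<le>N. (of_real (l n) * zz / sv a \<omega> n) * complex_of_real (phi n x))
     - (\<Sum>n\<le>N. (of_real (l n) * zz / sv a \<omega> n) * complex_of_real (- ((real n * pi)^2) * phi n x))
     = of_real (Lfun l N x) * zz"
proof -
  let ?c = "\<lambda>n. of_real (l n) * zz / sv a \<omega> n"
  have "mu a \<omega> * (\<Sum>n\<le>N. ?c n * complex_of_real (phi n x))
     - (\<Sum>n\<le>N. ?c n * complex_of_real (- ((real n * pi)^2) * phi n x))
     = (\<Sum>n\<le>N. mu a \<omega> * (?c n * complex_of_real (phi n x)) - ?c n * complex_of_real (- ((real n * pi)^2) * phi n x))"
    by (simp only: sum_distrib_left sum_subtractf[symmetric])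
  also have "... = (\<Sum>n\<le>N. ?c n * sv a \<omega> n * complex_of_real (phi n x))"
    by (rule sum.cong[OF refl]) (simp add: sv_mu algebra_simps add_divide_distrib)
  also have "... = (\<Sum>n\<le>N. of_real (l n * phi n x) * zz)"
    by (rule sum.cong[OF refl]) (simp add: sv_nz[OF om])
  also have "... = of_real (Lfun l N x) * zz"
    by (simp add: Lfun_def sum_distrib_right)
  finally show ?thesis .
qed

lemma ring_aux: fixes m z X Y Lz :: complex
  shows "m * X - Y = Lz \<Longrightarrow> (m * z - Lz) - Y = m * (z - X)"
  by (simp add: algebra_simps)

lemma solve_aux: fixes z A S :: complex
  assumes "S \<noteq> 1" "z = A + z * S" shows "z = A / (1 - S)"
proof -
  have "z * (1 - S) = A" using assms(2) by (simp add: algebra_simps)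
  moreover have "1 - S \<noteq> 0" using assms(1) by simp
  ultimately show ?thesis by (simp add: eq_divide_eq)
qed

lemma core_unique:
  fixes z z1 :: "real \<Rightarrow> complex"
  assumes om: "\<omega> \<noteq> 0" and S1: "cS a \<omega> l N \<noteq> 1"
   and d1: "\<forall>x\<in>{0..1}. (z has_vector_derivative z1 x) (at x within {0..1})"
   and d2: "\<forall>x\<in>{0..1}. (z1 has_vector_derivative (mu a \<omega> * z x - of_real (Lfun l N x) * z 0)) (at x within {0..1})"
   and b0: "z1 0 = 0" and b1: "z1 1 = \<beta>"
  shows "\<forall>x\<in>{0..1}. z x = Fz a \<omega> l N \<beta> x"
proof -
  define c where "c n = of_real (l n) * z 0 / sv a \<omega> n" for n
  define P where "P x = (\<Sum>n\<le>N. c n * complex_of_real (phi n x))" for x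
  define P1 where "P1 x = (\<Sum>n\<le>N. c n * complex_of_real (dphi n x))" for x
  define w where "w x = z x - P x" for x
  define w1 where "w1 x = z1 x - P1 x" for x
  define k where "k = kk a \<omega>"
  have wd1: "\<forall>x\<in>{0..1}. (w has_vector_derivative w1 x) (at x within {0..1})"
  proof
    fix x :: real assume x: "x \<in> {0..1}"
    show "(w has_vector_derivative w1 x) (at x within {0..1})"
      unfolding w_def[abs_def] w1_def P_def[abs_def] P1_def
      by (intro has_vector_derivative_diff d1[rule_format, OF x] P_vd)
  qed
  have wd2: "\<forall>x\<in>{0..1}. (w1 has_vector_derivative mu a \<omega> * w x) (at x within {0..1})"
  proof
    fix x :: real assume x: "x \<in> {0..1}"
    have "(w1 has_vector_derivative (mu a \<omega> * z x - of_real (Lfun l N x) * z 0)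
       - (\<Sum>n\<le>N. c n * complex_of_real (- ((real n * pi)^2) * phi n x))) (at x within {0..1})"
      unfolding w1_def[abs_def] P1_def[abs_def]
      by (intro has_vector_derivative_diff d2[rule_format, OF x] P1_vd)
    moreover have "(mu a \<omega> * z x - of_real (Lfun l N x) * z 0)
       - (\<Sum>n\<le>N. c n * complex_of_real (- ((real n * pi)^2) * phi n x)) = mu a \<omega> * w x"
      using L_expand[OF om, where l=l and zz="z 0" and N=N and x=x and a=a] unfolding w_def P_def c_def
      by (rule ring_aux)
    ultimately show "(w1 has_vector_derivative mu a \<omega> * w x) (at x within {0..1})" by simp
  qed
  have w10: "w1 0 = 0" by (simp add: w1_def P1_def b0 dphi_0)
  have w11: "w1 1 = \<beta>" by (simp add: w1_def P1_def b1 dphi_1)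
  note W = wronsk[OF kk_sq wd1 wd2 w10]
  have knz: "k \<noteq> 0" unfolding k_def by (rule kk_nz[OF om])
  have snz: "sinh k \<noteq> 0" unfolding k_def by (rule sinh_kk_nz[OF om])
  have wx: "w x = w 0 * cosh (k * of_real x)" if "x \<in> {0..1}" for x
  proof -
    have "k * w x = k * (w 0 * cosh (k * of_real x))"
      using W(1) that unfolding k_def mult.assoc by blast
    then show ?thesis using knz by simp
  qed
  have "\<beta> = w 0 * (k * sinh k)" using W(2) w11 unfolding k_def by (simp add: mult_ac)
  moreover have "k * sinh k \<noteq> 0" using knz snz by simp
  ultimately have w0: "w 0 = FA a \<omega> \<beta>"
    unfolding FA_def k_def[symmetric] by (simp add: eq_divide_eq)
  have "P 0 = z 0 * cS a \<omega> l N"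
    unfolding P_def cS_def c_def sum_distrib_left
    by (rule sum.cong[OF refl]) (simp add: phi_0 mult_ac)
  then have "z 0 = FA a \<omega> \<beta> + z 0 * cS a \<omega> l N" using w0 unfolding w_def by (simp add: algebra_simps)
  then have z0: "z 0 = FZ a \<omega> l N \<beta>"
    using solve_aux[OF S1] unfolding FZ_def by blast
  show ?thesis
  proof
    fix x :: real assume x: "x \<in> {0..1}"
    have "z x = w x + P x" by (simp add: w_def)
    also have "... = Fz a \<omega> l N \<beta> x"
      unfolding wx[OF x] w0 P_def c_def z0 Fz_def k_def ..
    finally show "z x = Fz a \<omega> l N \<beta> x" .
  qed
qed

definition toR :: "complex \<Rightarrow> real^2" where "toR z = vector [Re z, Im z]"
definition toC :: "real^2 \<Rightarrow> complex" where "toC v = Complex (v$1) (v$2)"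

lemma toR_toC [simp]: "toR (toC v) = v"
  unfolding toR_def toC_def by (simp add: vec_eq_iff forall_2)

lemma toC_toR [simp]: "toC (toR z) = z"
  unfolding toR_def toC_def by (simp add: complex_eq_iff)

lemma toC_diff: "toC (u - v) = toC u - toC v"
  unfolding toC_def by (simp add: complex_eq_iff)

lemma toC_scaleR: "toC (r *\<^sub>R v) = of_real r * toC v"
  unfolding toC_def by (simp add: complex_eq_iff)

lemma toC_zero [simp]: "toC 0 = 0"
  unfolding toC_def by (simp add: complex_eq_iff)

lemma toR_zero [simp]: "toR 0 = 0"
  unfolding toR_def by (simp add: vec_eq_iff forall_2)

lemma lin_toR: "bounded_linear toR"
proof -
  have "linear toR"
    by (rule linearI) (simp_all add: toR_def vec_eq_iff forall_2)
  then show ?thesis by (simp add: linear_conv_bounded_linear)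
qed

lemma lin_toC: "bounded_linear toC"
proof -
  have "linear toC"
    by (rule linearI) (simp_all add: toC_def complex_eq_iff)
  then show ?thesis by (simp add: linear_conv_bounded_linear)
qed

lemma toC_vM: "toC (v v* (Gc \<omega> - a *\<^sub>R mat 1)) = mu a \<omega> * toC v"
  unfolding toC_def vector_matrix_mult_def Gc_def mu_def
  by (simp add: sum_2 mat_def complex_eq_iff algebra_simps)

definition Fz1 :: "real \<Rightarrow> real \<Rightarrow> (nat \<Rightarrow> real) \<Rightarrow> nat \<Rightarrow> complex \<Rightarrow> real \<Rightarrow> complex" where
  "Fz1 a \<omega> l N \<beta> x = FA a \<omega> \<beta> * (kk a \<omega> * sinh (kk a \<omega> * of_real x))
     + (\<Sum>n\<le>N. of_real (l n) * FZ a \<omega> l N \<beta> / sv a \<omega> n * of_real (dphi n x))"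
definition Fz2 :: "real \<Rightarrow> real \<Rightarrow> (nat \<Rightarrow> real) \<Rightarrow> nat \<Rightarrow> complex \<Rightarrow> real \<Rightarrow> complex" where
  "Fz2 a \<omega> l N \<beta> x = FA a \<omega> \<beta> * (kk a \<omega> * (kk a \<omega> * cosh (kk a \<omega> * of_real x)))
     + (\<Sum>n\<le>N. of_real (l n) * FZ a \<omega> l N \<beta> / sv a \<omega> n * of_real (- ((real n * pi)^2) * phi n x))"

lemma Fz_vd: "((Fz a \<omega> l N \<beta>) has_vector_derivative Fz1 a \<omega> l N \<beta> x) (at x within S)"
  unfolding Fz_def[abs_def] Fz1_def
  by (intro has_vector_derivative_add has_vector_derivative_mult_right cosh_vd P_vd)

lemma Fz1_vd: "((Fz1 a \<omega> l N \<beta>) has_vector_derivative Fz2 a \<omega> l N \<beta> x) (at x within S)"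
  unfolding Fz1_def[abs_def] Fz2_def
  by (intro has_vector_derivative_add has_vector_derivative_mult_right sinh_vd P1_vd)

lemma Fz_0:
  assumes S1: "cS a \<omega> l N \<noteq> 1"
  shows "Fz a \<omega> l N \<beta> 0 = FZ a \<omega> l N \<beta>"
proof -
  have s: "(\<Sum>n\<le>N. of_real (l n) * FZ a \<omega> l N \<beta> / sv a \<omega> n * of_real (phi n 0)) = FZ a \<omega> l N \<beta> * cS a \<omega> l N"
    unfolding cS_def sum_distrib_left
    by (rule sum.cong[OF refl]) (simp add: phi_0 mult_ac)
  have ne: "1 - cS a \<omega> l N \<noteq> 0" using S1 by simp
  have "FZ a \<omega> l N \<beta> * (1 - cS a \<omega> l N) = FA a \<omega> \<beta>"
    unfolding FZ_def using ne by simp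
  then have "FA a \<omega> \<beta> + FZ a \<omega> l N \<beta> * cS a \<omega> l N = FZ a \<omega> l N \<beta>"
    by (simp add: algebra_simps)
  then show ?thesis unfolding Fz_def using s by simp
qed

lemma ring_aux2: fixes m X Y Lz A k c :: complex
  shows "m * X - Y = Lz \<Longrightarrow> k * k = m \<Longrightarrow> A * (k * (k * c)) + Y = m * (A * c + X) - Lz"
  by (simp add: algebra_simps)

lemma Fz2_eq:
  assumes om: "\<omega> \<noteq> 0"
  shows "Fz2 a \<omega> l N \<beta> x = mu a \<omega> * Fz a \<omega> l N \<beta> x - of_real (Lfun l N x) * FZ a \<omega> l N \<beta>"
  unfolding Fz2_def Fz_def
  by (rule ring_aux2[OF L_expand[OF om, where l=l and zz="FZ a \<omega> l N \<beta>" and N=N and x=x and a=a]])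
     (simp add: kk_sq[symmetric] power2_eq_square)

lemma Fz1_0: "Fz1 a \<omega> l N \<beta> 0 = 0"
  by (simp add: Fz1_def dphi_0)

lemma Fz1_1:
  assumes om: "\<omega> \<noteq> 0"
  shows "Fz1 a \<omega> l N \<beta> 1 = \<beta>"
proof -
  have "kk a \<omega> * sinh (kk a \<omega>) \<noteq> 0" using kk_nz[OF om] sinh_kk_nz[OF om] by simp
  then show ?thesis by (simp add: Fz1_def dphi_1 FA_def)
qed

lemma phi_cont [continuous_intros]: "continuous_on S (phi n)"
  by (rule continuous_on_vector_derivative)
     (rule phi_d[unfolded has_real_derivative_iff_has_vector_derivative])

lemma Lfun_cont: "continuous_on S (Lfun l N)"
  unfolding Lfun_def[abs_def] by (intro continuous_intros)

lemma Fz_cont: "continuous_on S (Fz a \<omega> l N \<beta>)"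
  by (rule continuous_on_vector_derivative) (rule Fz_vd)

lemma Fz2_cont:
  assumes om: "\<omega> \<noteq> 0"
  shows "continuous_on S (Fz2 a \<omega> l N \<beta>)"
proof -
  have "continuous_on S (\<lambda>x. mu a \<omega> * Fz a \<omega> l N \<beta> x - of_real (Lfun l N x) * FZ a \<omega> l N \<beta>)"
    by (intro continuous_intros Fz_cont Lfun_cont)
  then show ?thesis using Fz2_eq[OF om] by simp
qed

lemma exists_sol:
  fixes a \<tau> \<omega> :: real
  assumes om: "\<omega> \<noteq> 0" and S1: "cS a \<omega> l N \<noteq> 1"
  defines "\<beta> \<equiv> toC (- (gamma_c v* mexp (- (\<tau> *\<^sub>R Gc \<omega>))))"
  shows "is_solution a \<tau> \<omega> l N (\<lambda>x. toR (Fz a \<omega> l N \<beta> x))"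
proof -
  let ?g = "\<lambda>x. toR (Fz a \<omega> l N \<beta> x)"
  let ?g1 = "\<lambda>x. toR (Fz1 a \<omega> l N \<beta> x)"
  let ?g2 = "\<lambda>x. toR (Fz2 a \<omega> l N \<beta> x)"
  have gd: "(?g has_vector_derivative ?g1 x) (at x within S)" for x S
    by (rule bounded_linear.has_vector_derivative[OF lin_toR Fz_vd])
  have g1d: "(?g1 has_vector_derivative ?g2 x) (at x within S)" for x S
    by (rule bounded_linear.has_vector_derivative[OF lin_toR Fz1_vd])
  have g2c: "continuous_on S ?g2" for S
    by (rule bounded_linear.continuous_on[OF lin_toR Fz2_cont[OF om]])
  have gi: "\<forall>x\<in>{0..1}. ?g1 x = ?g1 0 + integral {0..x} ?g2"
  proof
    fix x :: real assume x: "x \<in> {0..1}"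
    have "(?g2 has_integral (?g1 x - ?g1 0)) {0..x}"
      by (rule fundamental_theorem_of_calculus) (use x in auto, rule g1d)
    then show "?g1 x = ?g1 0 + integral {0..x} ?g2" by (simp add: integral_unique)
  qed
  have meas: "?g2 \<in> borel_measurable (lebesgue_on {0..1})"
    by (rule continuous_imp_measurable_on_sets_lebesgue[OF g2c]) simp
  have intg: "integrable (lebesgue_on {0..1}) (\<lambda>x. (norm (?g2 x))^2)"
    by (rule continuous_imp_integrable_real) (intro continuous_intros g2c)
  have H2: "H2_on01 ?g ?g1 ?g2"
    unfolding H2_on01_def using gd gi meas intg by blast
  have eq: "?g2 x = ?g x v* (Gc \<omega> - a *\<^sub>R mat 1) - Lfun l N x *\<^sub>R ?g 0" for x
  proof -
    have "toC (?g x v* (Gc \<omega> - a *\<^sub>R mat 1) - Lfun l N x *\<^sub>R ?g 0)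
        = mu a \<omega> * Fz a \<omega> l N \<beta> x - of_real (Lfun l N x) * Fz a \<omega> l N \<beta> 0"
      by (simp add: toC_diff toC_vM toC_scaleR)
    also have "... = Fz2 a \<omega> l N \<beta> x" by (simp add: Fz2_eq[OF om] Fz_0[OF S1])
    finally have "toR (toC (?g x v* (Gc \<omega> - a *\<^sub>R mat 1) - Lfun l N x *\<^sub>R ?g 0)) = ?g2 x"
      by simp
    then show ?thesis by simp
  qed
  show ?thesis
    unfolding is_solution_def
  proof (intro exI conjI)
    show "H2_on01 ?g ?g1 ?g2" by (rule H2)
    show "AE x in lebesgue_on {0..1}. ?g2 x = ?g x v* (Gc \<omega> - a *\<^sub>R mat 1) - Lfun l N x *\<^sub>R ?g 0"
      using eq by simp
    show "?g1 0 = 0" by (simp add: Fz1_0)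
    show "?g1 1 = - (gamma_c v* mexp (- (\<tau> *\<^sub>R Gc \<omega>)))"
      by (simp add: Fz1_1[OF om] \<beta>_def)
  qed
qed

lemma uniq_sol:
  fixes a \<tau> \<omega> :: real
  assumes om: "\<omega> \<noteq> 0" and S1: "cS a \<omega> l N \<noteq> 1"
    and sol: "is_solution a \<tau> \<omega> l N g"
  defines "\<beta> \<equiv> toC (- (gamma_c v* mexp (- (\<tau> *\<^sub>R Gc \<omega>))))"
  shows "\<forall>x\<in>{0..1}. g x = toR (Fz a \<omega> l N \<beta> x)"
proof -
  obtain g1 g2 where H2: "H2_on01 g g1 g2"
    and ae: "AE x in lebesgue_on {0..1}. g2 x = g x v* (Gc \<omega> - a *\<^sub>R mat 1) - Lfun l N x *\<^sub>R g 0"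
    and b0: "g1 0 = 0" and b1: "g1 1 = - (gamma_c v* mexp (- (\<tau> *\<^sub>R Gc \<omega>)))"
    using sol unfolding is_solution_def by blast
  have gd: "\<forall>x\<in>{0..1}. (g has_vector_derivative g1 x) (at x within {0..1})"
    and gi: "\<forall>x\<in>{0..1}. g1 x = g1 0 + integral {0..x} g2"
    using H2 unfolding H2_on01_def by (blast, blast)
  define z where "z x = toC (g x)" for x
  define z1 where "z1 x = toC (g1 x)" for x
  define R where "R x = toR (mu a \<omega> * z x - of_real (Lfun l N x) * z 0)" for x
  obtain NN where NN: "NN \<in> null_sets (lebesgue_on {0..1})"
    and sub: "{x \<in> space (lebesgue_on {0..1}). \<not> (g2 x = g x v* (Gc \<omega> - a *\<^sub>R mat 1) - Lfun l N x *\<^sub>R g 0)} \<subseteq> NN"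
    using ae unfolding eventually_ae_filter by blast
  have negl: "negligible NN"
    using NN null_sets_restrict_space[of "{0..1::real}" lebesgue NN]
    by (simp add: negligible_iff_null_sets)
  have g2R: "g2 y = R y" if "y \<in> {0..1}" "y \<notin> NN" for y
  proof -
    have sp: "y \<in> space (lebesgue_on {0..1})" using that(1) by simp
    have "g2 y = g y v* (Gc \<omega> - a *\<^sub>R mat 1) - Lfun l N y *\<^sub>R g 0"
      using sub that(2) sp by blast
    also have "... = toR (toC (g y v* (Gc \<omega> - a *\<^sub>R mat 1) - Lfun l N y *\<^sub>R g 0))" by simp
    also have "... = R y" unfolding R_def z_def by (simp add: toC_diff toC_vM toC_scaleR)
    finally show ?thesis .
  qed
  have zd: "\<forall>x\<in>{0..1}. (z has_vector_derivative z1 x) (at x within {0..1})"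
    unfolding z_def[abs_def] z1_def
    using bounded_linear.has_vector_derivative[OF lin_toC] gd by blast
  have zc: "continuous_on {0..1} z"
    by (rule continuous_on_vector_derivative) (use zd in blast)
  have Rc: "continuous_on {0..1} R"
    unfolding R_def[abs_def]
    by (intro bounded_linear.continuous_on[OF lin_toR] continuous_intros zc Lfun_cont)
  have g1d: "(g1 has_vector_derivative R x) (at x within {0..1})" if x: "x \<in> {0..1}" for x
  proof -
    have "((\<lambda>u. g1 0 + integral {0..u} R) has_vector_derivative (0 + R x)) (at x within {0..1})"
      by (rule has_vector_derivative_add[OF has_vector_derivative_const integral_has_vector_derivative[OF Rc x]])
    then have d: "((\<lambda>u. g1 0 + integral {0..u} R) has_vector_derivative R x) (at x within {0..1})" by simp
    show ?thesis
    proof (rule has_vector_derivative_transform_within[OF d zero_less_one x])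
      fix x' assume x': "x' \<in> {0..1}" "dist x' x < 1"
      have i: "integral {0..x'} g2 = integral {0..x'} R"
      proof (rule integral_spike[OF negl])
        fix y assume y: "y \<in> {0..x'} - NN"
        then have "y \<in> {0..1}" "y \<notin> NN" using x'(1) by auto
        then show "R y = g2 y" using g2R by simp
      qed
      have "g1 x' = g1 0 + integral {0..x'} g2" using gi x'(1) by blast
      then show "g1 0 + integral {0..x'} R = g1 x'" using i by simp
    qed
  qed
  have z1d: "\<forall>x\<in>{0..1}. (z1 has_vector_derivative (mu a \<omega> * z x - of_real (Lfun l N x) * z 0)) (at x within {0..1})"
  proof
    fix x :: real assume x: "x \<in> {0..1}"
    have "(z1 has_vector_derivative toC (R x)) (at x within {0..1})"
      unfolding z1_def[abs_def] by (rule bounded_linear.has_vector_derivative[OF lin_toC g1d[OF x]])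
    then show "(z1 has_vector_derivative (mu a \<omega> * z x - of_real (Lfun l N x) * z 0)) (at x within {0..1})"
      by (simp add: R_def)
  qed
  have zF: "\<forall>x\<in>{0..1}. z x = Fz a \<omega> l N \<beta> x"
    by (rule core_unique[OF om S1 zd z1d]) (simp_all add: z1_def b0 b1 \<beta>_def)
  show ?thesis
  proof
    fix x :: real assume x: "x \<in> {0..1}"
    have "g x = toR (z x)" by (simp add: z_def)
    then show "g x = toR (Fz a \<omega> l N \<beta> x)" using zF x by simp
  qed
qed

theorem lemma2:
  fixes a \<tau> \<omega> \<delta> :: real and N :: nat and l :: "nat \<Rightarrow> real"
    and Q :: "nat \<Rightarrow> nat \<Rightarrow> real"
  assumes "\<tau> > 0" and "\<omega> > 0" and "\<delta> > 0"
    and "\<forall>n>N. a - (real n * pi)^2 < - \<delta>"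
    and "lyap_ok a N l \<delta> Q"
  shows "(\<exists>g. is_solution a \<tau> \<omega> l N g) \<and>
         (\<forall>g h. is_solution a \<tau> \<omega> l N g \<and> is_solution a \<tau> \<omega> l N h
            \<longrightarrow> (\<forall>x\<in>{0..1}. g x = h x))"
proof
  have om: "\<omega> \<noteq> 0" using assms(2) by simp
  have S1: "cS a \<omega> l N \<noteq> 1"
    unfolding cS_def by (rule S_ne_1[OF om assms(3) assms(5)])
  show "\<exists>g. is_solution a \<tau> \<omega> l N g"
    using exists_sol[OF om S1] by blast
  show "\<forall>g h. is_solution a \<tau> \<omega> l N g \<and> is_solution a \<tau> \<omega> l N h
            \<longrightarrow> (\<forall>x\<in>{0..1}. g x = h x)"
  proof (intro allI impI)
    fix g h assume gh: "is_solution a \<tau> \<omega> l N g \<and> is_solution a \<tau> \<omega> l N h"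
    show "\<forall>x\<in>{0..1}. g x = h x"
      using uniq_sol[OF om S1, of \<tau> g] uniq_sol[OF om S1, of \<tau> h] gh by simp
  qed
qed

end
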